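(* Let $d\in\mathbb N^*$, $m\in\mathbb R^d$ and $R>0$. There exists an explicit constant $L_R$ (depending on $R$, $d$ and $m$) such that for every $x\in\mathbb R^d$ with $\|x\|\le R$ and every $r\le 1/R$, \[ |\eta(B(x,r))-\eta(x)|\le L_R\,\mu(B(x,r))^{2/d}. \]
   Context: $\gamma(x)=(2\pi)^{-d/2}e^{-\|x\|^2/2}$ is the standard Gaussian density on $\mathbb R^d$ (Euclidean norm $\|\cdot\|$). Gaussian translation model in $\mathbb R^d$: the design distribution is $\mu=\frac12\gamma(\cdot)+\frac12\gamma(\cdot-m)$ and the regression function is $\eta(x)=\frac{\gamma(x)}{\gamma(x)+\gamma(x-m)}$. $B(x,r)$ is the Euclidean ball of center $x$ and radius $r$, and $\eta(B(x,r))=\frac{1}{\mu(B(x,r))}\int_{B(x,r)}\eta\,d\mu$ is the $\mu$-average of $\eta$ on that ball. *)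

theory Defs
  imports "HOL-Analysis.Analysis"
begin

definition gauss :: "'a::euclidean_space \<Rightarrow> real" where
  "gauss x = (2 * pi) powr (- real DIM('a) / 2) * exp (- ((norm x)\<^sup>2) / 2)"

definition design_measure :: "'a::euclidean_space \<Rightarrow> 'a measure" where
  "design_measure m = density lborel (\<lambda>y. ennreal (gauss y / 2 + gauss (y - m) / 2))"

definition eta :: "'a::euclidean_space \<Rightarrow> 'a \<Rightarrow> real" where
  "eta m x = gauss x / (gauss x + gauss (x - m))"

definition eta_ball :: "'a::euclidean_space \<Rightarrow> 'a \<Rightarrow> real \<Rightarrow> real" where
  "eta_ball m x r = (1 / measure (design_measure m) (ball x r)) *
      (\<integral>y\<in>ball x r. eta m y \<partial>(design_measure m))"

end

theory Submission imports Defs begin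

lemma cosh_bound:
  fixes t s T :: real
  assumes "\<bar>t\<bar> \<le> T" "0 \<le> s"
  shows "\<bar>exp (-s) * ((exp t + exp (-t)) / 2) - 1\<bar> \<le> exp T * t\<^sup>2 / 2 + s"
proof -
  obtain a where a: "\<bar>a\<bar> \<le> \<bar>t\<bar>" "exp t = (\<Sum>m<2. t ^ m / fact m) + exp a / fact 2 * t ^ 2"
    using Maclaurin_exp_le[of t 2] by blast
  obtain b where b: "\<bar>b\<bar> \<le> \<bar>-t\<bar>" "exp (-t) = (\<Sum>m<2. (-t) ^ m / fact m) + exp b / fact 2 * (-t) ^ 2"
    using Maclaurin_exp_le[of "-t" 2] by blast
  have ea: "exp t = 1 + t + exp a / 2 * t\<^sup>2" using a(2) by (simp add: numeral_2_eq_2)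
  have eb: "exp (-t) = 1 - t + exp b / 2 * t\<^sup>2" using b(2) by (simp add: numeral_2_eq_2)
  define C where "C = (exp t + exp (-t)) / 2 - 1"
  have C: "C = (exp a + exp b) / 4 * t\<^sup>2" unfolding C_def ea eb by (simp add: field_simps)
  have "exp a \<le> exp T" "exp b \<le> exp T" using a(1) b(1) assms(1) by auto
  hence "exp a + exp b \<le> 2 * exp T" by linarith
  hence "(exp a + exp b) / 4 \<le> exp T / 2" by simp
  hence "(exp a + exp b) / 4 * t\<^sup>2 \<le> exp T / 2 * t\<^sup>2" by (rule mult_right_mono) simp
  hence C1: "C \<le> exp T * t\<^sup>2 / 2" unfolding C by simp
  have C0: "0 \<le> C" unfolding C by (simp add: add_pos_pos)
  have es: "exp (-s) \<le> 1" "0 < exp (-s)" "1 - s \<le> exp (-s)" using assms(2) exp_ge_add_one_self[of "-s"] by auto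
  have eq: "exp (-s) * ((exp t + exp (-t)) / 2) - 1 = exp (-s) * C + (exp (-s) - 1)"
    unfolding C_def by (simp add: algebra_simps)
  have "exp (-s) * C \<le> C" using es C0 by (simp add: mult_left_le_one_le)
  moreover have "0 \<le> exp (-s) * C" using es C0 by simp
  ultimately show ?thesis unfolding eq using C1 es by linarith
qed

lemma gauss_sum:
  fixes z h :: "'a::euclidean_space"
  shows "gauss (z + h) + gauss (z - h) = 2 * gauss z * (exp (- (norm h)\<^sup>2 / 2) * ((exp (z \<bullet> h) + exp (- (z \<bullet> h))) / 2))"
proof -
  have n1: "(norm (z + h))\<^sup>2 = (norm z)\<^sup>2 + 2 * (z \<bullet> h) + (norm h)\<^sup>2"
    by (simp add: power2_norm_eq_inner inner_add_left inner_add_right inner_commute)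
  have n2: "(norm (z - h))\<^sup>2 = (norm z)\<^sup>2 - 2 * (z \<bullet> h) + (norm h)\<^sup>2"
    by (simp add: power2_norm_eq_inner inner_diff_left inner_diff_right inner_commute)
  have e1: "exp (- (norm (z + h))\<^sup>2 / 2) = exp (- (norm z)\<^sup>2 / 2) * exp (- (norm h)\<^sup>2 / 2) * exp (- (z \<bullet> h))"
    unfolding n1 by (simp add: exp_add[symmetric] exp_diff field_simps)
  have e2: "exp (- (norm (z - h))\<^sup>2 / 2) = exp (- (norm z)\<^sup>2 / 2) * exp (- (norm h)\<^sup>2 / 2) * exp (z \<bullet> h)"
    unfolding n2 by (simp add: exp_add[symmetric] exp_diff field_simps)
  show ?thesis unfolding gauss_def e1 e2 by (simp add: algebra_simps)
qed


lemma gauss_pos: "0 < gauss (x::'a::euclidean_space)"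
  unfolding gauss_def by simp

lemma gauss_le: "gauss (x::'a::euclidean_space) \<le> (2 * pi) powr (- real DIM('a) / 2)"
  unfolding gauss_def by simp

lemma second_diff:
  fixes x h m :: "'a::euclidean_space" and K T :: real
  assumes "\<bar>x \<bullet> h\<bar> \<le> K * norm h" "\<bar>(x - m) \<bullet> h\<bar> \<le> K * norm h" "K * norm h \<le> T" "0 \<le> K"
  shows "\<bar>(gauss (x + h) / 2 - eta m x * (gauss (x + h) / 2 + gauss (x + h - m) / 2))
          + (gauss (x - h) / 2 - eta m x * (gauss (x - h) / 2 + gauss (x - h - m) / 2))\<bar>
         \<le> (2 * pi) powr (- real DIM('a) / 2) * (exp T * K\<^sup>2 + 1) * (norm h)\<^sup>2"
proof -
  define gx where "gx = gauss x"
  define gm where "gm = gauss (x - m)"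
  define s where "s = (norm h)\<^sup>2 / 2"
  define E1 where "E1 = exp (- s) * ((exp (x \<bullet> h) + exp (- (x \<bullet> h))) / 2)"
  define E2 where "E2 = exp (- s) * ((exp ((x - m) \<bullet> h) + exp (- ((x - m) \<bullet> h))) / 2)"
  have gxp: "0 < gx" and gmp: "0 < gm" unfolding gx_def gm_def by (auto intro: gauss_pos)
  have S1: "gauss (x + h) + gauss (x - h) = 2 * gx * E1"
    unfolding gx_def E1_def s_def gauss_sum by simp
  have S2: "gauss (x + h - m) + gauss (x - h - m) = 2 * gm * E2"
  proof -
    have "gauss (x + h - m) + gauss (x - h - m) = gauss ((x - m) + h) + gauss ((x - m) - h)"
      by (simp add: algebra_simps)
    also have "\<dots> = 2 * gm * E2" unfolding gm_def E2_def s_def gauss_sum by simp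
    finally show ?thesis .
  qed
  define A where "A = gx * gm / (gx + gm)"
  have eta: "eta m x = gx / (gx + gm)" unfolding eta_def gx_def gm_def by simp
  have q1: "(1 - eta m x) * gx = A" unfolding eta A_def using gxp gmp
    by (simp add: field_simps)
  have q2: "eta m x * gm = A" unfolding eta A_def using gxp gmp
    by (simp add: field_simps)
  have eq: "(gauss (x + h) / 2 - eta m x * (gauss (x + h) / 2 + gauss (x + h - m) / 2))
          + (gauss (x - h) / 2 - eta m x * (gauss (x - h) / 2 + gauss (x - h - m) / 2))
          = (1 - eta m x) * (gauss (x + h) + gauss (x - h)) / 2 - eta m x * (gauss (x + h - m) + gauss (x - h - m)) / 2"
    by (simp add: algebra_simps)
  have eq2: "\<dots> = ((1 - eta m x) * gx) * E1 - (eta m x * gm) * E2"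
    unfolding S1 S2 by (simp add: field_simps)
  have eq3: "\<dots> = A * (E1 - E2)" unfolding q1 q2 by (simp add: algebra_simps)
  have s0: "0 \<le> s" unfolding s_def by simp
  have t1: "(x \<bullet> h)\<^sup>2 \<le> K\<^sup>2 * (norm h)\<^sup>2"
    using assms(1) by (metis abs_ge_zero power2_le_iff_abs_le power_mult_distrib mult_nonneg_nonneg assms(4) norm_ge_zero)
  have t2: "((x - m) \<bullet> h)\<^sup>2 \<le> K\<^sup>2 * (norm h)\<^sup>2"
    using assms(2) by (metis abs_ge_zero power2_le_iff_abs_le power_mult_distrib mult_nonneg_nonneg assms(4) norm_ge_zero)
  have b1: "\<bar>E1 - 1\<bar> \<le> exp T * (x \<bullet> h)\<^sup>2 / 2 + s"
    unfolding E1_def by (rule cosh_bound) (use assms s0 in auto)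
  have b2: "\<bar>E2 - 1\<bar> \<le> exp T * ((x - m) \<bullet> h)\<^sup>2 / 2 + s"
    unfolding E2_def by (rule cosh_bound) (use assms s0 in auto)
  have e1: "exp T * (x \<bullet> h)\<^sup>2 \<le> exp T * (K\<^sup>2 * (norm h)\<^sup>2)" using t1 by simp
  have e2: "exp T * ((x - m) \<bullet> h)\<^sup>2 \<le> exp T * (K\<^sup>2 * (norm h)\<^sup>2)" using t2 by simp
  have tri: "\<bar>E1 - E2\<bar> \<le> \<bar>E1 - 1\<bar> + \<bar>E2 - 1\<bar>"
    using abs_triangle_ineq4[of "E1 - 1" "E2 - 1"] by simp
  have dist: "(exp T * K\<^sup>2 + 1) * (norm h)\<^sup>2 = exp T * (K\<^sup>2 * (norm h)\<^sup>2) + 2 * ((norm h)\<^sup>2 / 2)"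
    by (simp add: algebra_simps)
  have b: "\<bar>E1 - E2\<bar> \<le> (exp T * K\<^sup>2 + 1) * (norm h)\<^sup>2"
    unfolding dist using tri b1 b2 e1 e2 unfolding s_def by linarith
  have A0: "0 \<le> A" unfolding A_def using gxp gmp by simp
  have A1: "A \<le> gx" unfolding A_def using gxp gmp by (simp add: field_simps)
  have Ac: "A \<le> (2 * pi) powr (- real DIM('a) / 2)" using A1 gauss_le[of x] unfolding gx_def by linarith
  have "\<bar>A * (E1 - E2)\<bar> = A * \<bar>E1 - E2\<bar>" using A0 by (simp add: abs_mult)
  also have "\<dots> \<le> (2 * pi) powr (- real DIM('a) / 2) * ((exp T * K\<^sup>2 + 1) * (norm h)\<^sup>2)"
    using A0 Ac b by (meson abs_ge_zero mult_mono order_trans)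
  finally show ?thesis unfolding eq eq2 eq3 by (simp add: mult.assoc)
qed


lemma gauss_cont: "continuous_on UNIV (gauss :: 'a::euclidean_space \<Rightarrow> real)"
  unfolding gauss_def[abs_def] by (intro continuous_intros) auto

lemma gauss_shift_cont: "continuous_on UNIV (\<lambda>y::'a::euclidean_space. gauss (y - m))"
  by (rule continuous_on_compose2[OF gauss_cont]) (auto intro: continuous_intros)

lemma gauss_sum_ne: "gauss x + gauss (y::'a::euclidean_space) \<noteq> 0"
  using gauss_pos[of x] gauss_pos[of y] by linarith

lemma eta_cont: "continuous_on UNIV (eta (m::'a::euclidean_space))"
  unfolding eta_def[abs_def]
  by (intro continuous_on_divide gauss_cont continuous_on_add gauss_shift_cont)
     (simp add: gauss_sum_ne)

lemma integ_ball:
  fixes F :: "'a::euclidean_space \<Rightarrow> real"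
  assumes "continuous_on UNIV F"
  shows "integrable lborel (\<lambda>y. indicator (ball x r) y * F y)"
proof -
  have "set_integrable lborel (cball x r) F"
    unfolding set_integrable_def
    by (rule borel_integrable_compact) (use assms continuous_on_subset in auto)
  then have "set_integrable lborel (ball x r) F"
    by (rule set_integrable_subset) auto
  then show ?thesis unfolding set_integrable_def by simp
qed

lemma reflect_integral:
  fixes F :: "'a::euclidean_space \<Rightarrow> real"
  assumes [measurable]: "F \<in> borel_measurable borel"
  shows "(\<integral>y. indicator (ball x r) y * F y \<partial>lborel)
       = (\<integral>y. indicator (ball x r) y * F (2 *\<^sub>R x + (-1) *\<^sub>R y) \<partial>lborel)"
proof -
  have L: "lborel = distr lborel borel (\<lambda>y::'a. 2 *\<^sub>R x + (-1) *\<^sub>R y)"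
    by (subst lborel_affine[of "-1" "2 *\<^sub>R x"]) (simp_all add: density_1)
  have "(\<integral>y. indicator (ball x r) y * F y \<partial>lborel)
     = (\<integral>y. indicator (ball x r) y * F y \<partial>(distr lborel borel (\<lambda>y::'a. 2 *\<^sub>R x + (-1) *\<^sub>R y)))"
    using L by simp
  also have "\<dots> = (\<integral>y. indicator (ball x r) (2 *\<^sub>R x + (-1) *\<^sub>R y) * F (2 *\<^sub>R x + (-1) *\<^sub>R y) \<partial>lborel)"
    by (rule integral_distr) (auto intro!: borel_measurable_times borel_measurable_indicator)
  also have "\<dots> = (\<integral>y. indicator (ball x r) y * F (2 *\<^sub>R x + (-1) *\<^sub>R y) \<partial>lborel)"
  proof (rule Bochner_Integration.integral_cong[OF refl])
    fix y :: 'a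
    have "dist x (2 *\<^sub>R x + (-1) *\<^sub>R y) = dist x y"
      unfolding dist_norm by (metis (no_types, lifting) add_diff_cancel_left' diff_add_eq_diff_diff_swap
          minus_diff_eq norm_minus_commute scaleR_2 scaleR_minus1_left uminus_add_conv_diff)
    then show "indicator (ball x r) (2 *\<^sub>R x + (-1) *\<^sub>R y) * F (2 *\<^sub>R x + (-1) *\<^sub>R y)
        = indicator (ball x r) y * F (2 *\<^sub>R x + (-1) *\<^sub>R y)"
      by (simp add: indicator_def mem_ball)
  qed
  finally show ?thesis .
qed


theorem proposition2:
  fixes m :: "'a::euclidean_space" and R :: real
  assumes "R > 0"
  shows "\<exists>L. \<forall>x::'a. \<forall>r::real. norm x \<le> R \<longrightarrow> 0 < r \<longrightarrow> r \<le> 1 / R \<longrightarrow>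
           \<bar>eta_ball m x r - eta m x\<bar> \<le>
             L * (measure (design_measure m) (ball x r)) powr (2 / real DIM('a))"
proof -
  define d where "d = real DIM('a)"
  have d0: "0 < d" unfolding d_def by simp
  define c0 where "c0 = (2 * pi) powr (- real DIM('a) / 2)"
  have c0p: "0 < c0" unfolding c0_def by simp
  define K where "K = R + norm m"
  define T where "T = K / R"
  define Cq where "Cq = c0 * (exp T * K\<^sup>2 + 1)"
  define fmin where "fmin = c0 / 2 * exp (- (R + 1 / R)\<^sup>2 / 2)"
  define \<omega> where "\<omega> = measure lborel (ball (0::'a) 1)"
  have fminp: "0 < fmin" unfolding fmin_def using c0p by simp
  have \<omega>p: "0 < \<omega>" unfolding \<omega>_def by (rule content_ball_pos) simp
  have Cq0: "0 \<le> Cq" unfolding Cq_def using c0p by simp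
  define L where "L = Cq / (2 * fmin * (fmin * \<omega>) powr (2 / d))"
  have Kp: "0 \<le> K" unfolding K_def using assms by simp
  define f where "f = (\<lambda>y::'a. gauss y / 2 + gauss (y - m) / 2)"
  have f_cont: "continuous_on UNIV f" unfolding f_def
    by (intro continuous_intros gauss_cont gauss_shift_cont) auto
  have f_meas[measurable]: "f \<in> borel_measurable borel"
    by (rule borel_measurable_continuous_onI[OF f_cont])
  have f_pos: "0 < f y" for y unfolding f_def by (simp add: add_pos_pos gauss_pos)
  have gauss_meas[measurable]: "(gauss :: 'a \<Rightarrow> real) \<in> borel_measurable borel"
    by (rule borel_measurable_continuous_onI[OF gauss_cont])
  have eta_meas[measurable]: "eta m \<in> borel_measurable borel"
    by (rule borel_measurable_continuous_onI[OF eta_cont])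
  have D: "design_measure m = density lborel f" unfolding design_measure_def f_def by simp
  show ?thesis
  proof (intro exI allI impI)
    fix x :: 'a and r :: real
    assume xR: "norm x \<le> R" and r0: "0 < r" and rR: "r \<le> 1 / R"
    define B where "B = ball x r"
    define G where "G = (\<lambda>y. gauss y / 2 - eta m x * f y)"
    have G_cont: "continuous_on UNIV G" unfolding G_def
      by (intro continuous_intros gauss_cont f_cont) auto
    have G_meas[measurable]: "G \<in> borel_measurable borel"
      by (rule borel_measurable_continuous_onI[OF G_cont])
    define V where "V = measure lborel B"
    have V: "V = r ^ DIM('a) * \<omega>" unfolding V_def B_def \<omega>_def
      using content_ball_conv_unit_ball[of r x] r0 by simp
    have Vp: "0 < V" unfolding V using r0 \<omega>p by simp
    have intB: "integrable lborel (\<lambda>y. indicator B y * F y)" if "continuous_on UNIV F" for F :: "'a \<Rightarrow> real"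
      unfolding B_def by (rule integ_ball[OF that])
    have intB1: "integrable lborel (\<lambda>y. indicator B y * (c::real))" for c
      by (rule intB) simp
    have intconst: "(\<integral>y. indicator B y * (c::real) \<partial>lborel) = V * c" for c
      unfolding V_def by simp
    define \<mu>B where "\<mu>B = measure (design_measure m) B"
    have muB: "\<mu>B = (\<integral>y. indicator B y * f y \<partial>lborel)"
    proof -
      have "\<mu>B = integral\<^sup>L (density lborel f) (indicator B)"
        unfolding \<mu>B_def D by simp
      also have "\<dots> = (\<integral>y. f y *\<^sub>R indicator B y \<partial>lborel)"
        by (rule integral_density) (auto simp: less_imp_le[OF f_pos] B_def intro!: borel_measurable_indicator borel_measurable_times borel_measurable_scaleR)
      finally show ?thesis by (simp add: mult.commute)
    qed
    have J: "(\<integral>y\<in>B. eta m y \<partial>(design_measure m)) = (\<integral>y. indicator B y * (gauss y / 2) \<partial>lborel)"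
    proof -
      have "(\<integral>y\<in>B. eta m y \<partial>(design_measure m)) = integral\<^sup>L (density lborel f) (\<lambda>y. indicator B y *\<^sub>R eta m y)"
        unfolding set_lebesgue_integral_def D by simp
      also have "\<dots> = (\<integral>y. f y *\<^sub>R (indicator B y *\<^sub>R eta m y) \<partial>lborel)"
        by (rule integral_density) (auto simp: less_imp_le[OF f_pos] B_def intro!: borel_measurable_indicator borel_measurable_times borel_measurable_scaleR)
      also have "\<dots> = (\<integral>y. indicator B y * (gauss y / 2) \<partial>lborel)"
      proof (rule Bochner_Integration.integral_cong[OF refl])
        fix y
        have "f y * eta m y = gauss y / 2"
          unfolding f_def eta_def using gauss_pos[of y] gauss_pos[of "y - m"]
          by (simp add: field_simps)
        then show "f y *\<^sub>R (indicator B y *\<^sub>R eta m y) = indicator B y * (gauss y / 2)"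
          by (simp add: algebra_simps)
      qed
      finally show ?thesis .
    qed
    have muB_lower: "fmin * V \<le> \<mu>B"
    proof -
      have "(\<integral>y. indicator B y * fmin \<partial>lborel) \<le> (\<integral>y. indicator B y * f y \<partial>lborel)"
      proof (rule integral_mono[OF intB1 intB[OF f_cont]])
        fix y :: 'a
        show "indicator B y * fmin \<le> indicator B y * f y"
        proof (cases "y \<in> B")
          case True
          then have "norm (x - y) < r" unfolding B_def mem_ball dist_norm .
          then have "norm y \<le> R + 1 / R"
            using xR rR norm_triangle_sub[of y x] norm_minus_commute[of y x] by linarith
          then have "(norm y)\<^sup>2 \<le> (R + 1 / R)\<^sup>2" by (simp add: power_mono)
          then have "exp (- (R + 1 / R)\<^sup>2 / 2) \<le> exp (- (norm y)\<^sup>2 / 2)" by simp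
          then have "fmin \<le> gauss y / 2" unfolding fmin_def gauss_def c0_def by simp
          also have "\<dots> \<le> f y" unfolding f_def using gauss_pos[of "y - m"] by simp
          finally show ?thesis using True by simp
        qed simp
      qed
      then show ?thesis unfolding muB intconst by (simp add: mult.commute)
    qed
    have muBp: "0 < \<mu>B" using muB_lower mult_pos_pos[OF fminp Vp] by linarith
    define I where "I = (\<integral>y. indicator B y * G y \<partial>lborel)"
    have Ieq: "I = (\<integral>y. indicator B y * (gauss y / 2) \<partial>lborel) - eta m x * \<mu>B"
    proof -
      have "I = (\<integral>y. indicator B y * (gauss y / 2) - eta m x * (indicator B y * f y) \<partial>lborel)"
        unfolding I_def G_def by (rule Bochner_Integration.integral_cong) (simp_all add: algebra_simps)
      also have "\<dots> = (\<integral>y. indicator B y * (gauss y / 2) \<partial>lborel) - (\<integral>y. eta m x * (indicator B y * f y) \<partial>lborel)"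
        by (rule Bochner_Integration.integral_diff)
           (auto intro!: intB f_cont continuous_intros gauss_cont)
      finally show ?thesis unfolding muB by simp
    qed
    have diff: "eta_ball m x r - eta m x = I / \<mu>B"
      unfolding eta_ball_def Ieq using muBp
      by (simp add: J[unfolded B_def] \<mu>B_def[unfolded B_def, symmetric] field_simps B_def)
    have Irefl: "I = (\<integral>y. indicator B y * G (2 *\<^sub>R x + (-1) *\<^sub>R y) \<partial>lborel)"
      unfolding I_def B_def by (rule reflect_integral) simp
    have G2_cont: "continuous_on UNIV (\<lambda>y. G (2 *\<^sub>R x + (-1) *\<^sub>R y))"
    proof -
      have "continuous_on UNIV (\<lambda>y::'a. 2 *\<^sub>R x + (-1) *\<^sub>R y)" by (intro continuous_intros)
      then show ?thesis by (rule continuous_on_compose2[OF G_cont]) simp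
    qed
    have G2_cont': "continuous_on UNIV (\<lambda>y. G (2 *\<^sub>R x - y))" using G2_cont by simp
    have I2: "2 * I = (\<integral>y. indicator B y * (G y + G (2 *\<^sub>R x + (-1) *\<^sub>R y)) \<partial>lborel)"
    proof -
      have "(\<integral>y. indicator B y * (G y + G (2 *\<^sub>R x + (-1) *\<^sub>R y)) \<partial>lborel)
          = (\<integral>y. indicator B y * G y + indicator B y * G (2 *\<^sub>R x + (-1) *\<^sub>R y) \<partial>lborel)"
        by (simp add: algebra_simps)
      also have "\<dots> = I + I"
        unfolding I_def[of] by (subst Bochner_Integration.integral_add)
          (auto intro!: intB G_cont G2_cont G2_cont' simp: Irefl[unfolded I_def])
      finally show ?thesis by simp
    qed
    have pt: "\<bar>indicator B y * (G y + G (2 *\<^sub>R x + (-1) *\<^sub>R y))\<bar> \<le> indicator B y * (Cq * r\<^sup>2)" for y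
    proof (cases "y \<in> B")
      case True
      define h where "h = y - x"
      have hr: "norm h < r" using True unfolding B_def h_def mem_ball dist_norm by (simp add: norm_minus_commute)
      have y1: "x + h = y" "x - h = 2 *\<^sub>R x + (-1) *\<^sub>R y" unfolding h_def
        by (simp_all add: algebra_simps scaleR_2)
      have k1: "norm x \<le> K" using xR norm_ge_zero[of m] unfolding K_def by linarith
      have k2: "norm (x - m) \<le> K" using xR norm_triangle_ineq4[of x m] unfolding K_def by linarith
      have "norm x * norm h \<le> K * norm h" using k1 by (rule mult_right_mono) simp
      then have a1: "\<bar>x \<bullet> h\<bar> \<le> K * norm h"
        using Cauchy_Schwarz_ineq2[of x h] by linarith
      have "norm (x - m) * norm h \<le> K * norm h" using k2 by (rule mult_right_mono) simp
      then have a2: "\<bar>(x - m) \<bullet> h\<bar> \<le> K * norm h"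
        using Cauchy_Schwarz_ineq2[of "x - m" h] by linarith
      have a3: "K * norm h \<le> T"
      proof -
        have "K * norm h \<le> K * (1 / R)" using hr rR Kp by (intro mult_left_mono) auto
        then show ?thesis unfolding T_def by simp
      qed
      have "\<bar>G (x + h) + G (x - h)\<bar> \<le> Cq * (norm h)\<^sup>2"
        unfolding G_def f_def Cq_def c0_def using second_diff[OF a1 a2 a3 Kp]
        by (simp add: mult.assoc)
      then have "\<bar>G y + G (2 *\<^sub>R x + (-1) *\<^sub>R y)\<bar> \<le> Cq * (norm h)\<^sup>2"
        by (simp only: y1)
      also have "\<dots> \<le> Cq * r\<^sup>2" using hr Cq0
        by (intro mult_left_mono power_mono) auto
      finally show ?thesis using True by simp
    qed simp
    have Ibound: "\<bar>2 * I\<bar> \<le> V * (Cq * r\<^sup>2)"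
      unfolding I2 intconst[symmetric]
      by (rule integral_abs_bound_integral[OF intB[OF continuous_on_add[OF G_cont G2_cont]] intB1 pt])
    have absdiff: "\<bar>eta_ball m x r - eta m x\<bar> \<le> Cq * r\<^sup>2 / (2 * fmin)"
    proof -
      have "\<bar>eta_ball m x r - eta m x\<bar> = \<bar>I\<bar> / \<mu>B" unfolding diff using muBp by simp
      also have "\<dots> \<le> (V * (Cq * r\<^sup>2) / 2) / (fmin * V)"
        using Ibound muB_lower muBp fminp Vp Cq0
        by (intro frac_le) (auto simp: mult_pos_pos)
      also have "\<dots> = Cq * r\<^sup>2 / (2 * fmin)" using Vp fminp by (simp add: field_simps)
      finally show ?thesis .
    qed
    have rd: "(r ^ DIM('a)) powr (2 / d) = r\<^sup>2"
    proof -
      have "r ^ DIM('a) = r powr d" unfolding d_def using r0 by (simp add: powr_realpow)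
      hence "(r ^ DIM('a)) powr (2 / d) = r powr (d * (2 / d))" by (simp add: powr_powr)
      also have "d * (2 / d) = 2" using d0 by simp
      finally show ?thesis using r0 by simp
    qed
    have pw: "(fmin * \<omega>) powr (2 / d) * r\<^sup>2 \<le> \<mu>B powr (2 / d)"
    proof -
      have "(fmin * \<omega>) powr (2 / d) * r\<^sup>2 = (fmin * \<omega>) powr (2 / d) * (r ^ DIM('a)) powr (2 / d)"
        by (simp only: rd)
      also have "\<dots> = (fmin * \<omega> * r ^ DIM('a)) powr (2 / d)"
        using fminp \<omega>p r0 by (simp add: powr_mult)
      also have "\<dots> = (fmin * V) powr (2 / d)"
        unfolding V by (simp add: mult_ac)
      also have "\<dots> \<le> \<mu>B powr (2 / d)"
        using muB_lower fminp Vp d0 by (intro powr_mono2) auto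
      finally show ?thesis .
    qed
    have "Cq * r\<^sup>2 / (2 * fmin) = L * ((fmin * \<omega>) powr (2 / d) * r\<^sup>2)"
      unfolding L_def using fminp \<omega>p by (simp add: field_simps)
    also have "\<dots> \<le> L * \<mu>B powr (2 / d)"
      using pw Cq0 fminp \<omega>p unfolding L_def by (intro mult_left_mono) auto
    finally show "\<bar>eta_ball m x r - eta m x\<bar> \<le> L * measure (design_measure m) (ball x r) powr (2 / real DIM('a))"
      using absdiff unfolding \<mu>B_def B_def d_def by simp
  qed
qed

end
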